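(* Let $p\geq1$, $\mu>0$, and let $g:\mathbb{R}^n\to\mathbb{R}\cup\{+\infty\}$ be convex. Let $\lambda^{\ast}$ be the optimal solution of $$\min_{\lambda\in\mathbb{R}^n}\Big\{g(\lambda)+\frac{\mu}{1+\frac1p}\lVert\lambda\rVert^{1+\frac1p}\Big\},$$ and suppose $\lambda^{\ast}\neq0$. Let $\lambda^k\in\mathbb{R}^n$ with $\lVert\lambda^k\rVert>0$, set $t^k=\lVert\lambda^k\rVert^{\frac1p-1}$, and let $\lambda^{k+1}=\arg\min_{\lambda\in\mathbb{R}^n}\{g(\lambda)+\frac{\mu}{2}t^k\lVert\lambda\rVert^2\}$. Then $$(\lambda^{k+1}-\lambda^{\ast})^T\Big\{\lVert\lambda^k\rVert^{1-\frac1p}\lambda^{\ast}-\lVert\lambda^{\ast}\rVert^{1-\frac1p}\lambda^{k+1}\Big\}\geq0,$$ and $$\big(\lVert\lambda^k\rVert^{1-\frac1p}-\lVert\lambda^{\ast}\rVert^{1-\frac1p}\big)(\lambda^{k+1}-\lambda^{\ast})^T\lambda^{k+1}\geq\lVert\lambda^k\rVert^{1-\frac1p}\lVert\lambda^{k+1}-\lambda^{\ast}\rVert^2.$$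
   Context: $\lVert\cdot\rVert$ is the Euclidean norm. The minimizers above are assumed to exist. This is one step of the fixed point iteration: given $\lambda^k$, set $t^k=\lVert\lambda^k\rVert^{1/p-1}$ if $\lambda^k\neq0$ and $t^k=0$ otherwise, and $\lambda^{k+1}=\arg\min_\lambda\{g(\lambda)+\frac{\mu}{2}t^k\lVert\lambda\rVert^2\}$. *)

theory Defs
  imports "HOL-Analysis.Analysis" "HOL-Library.Extended_Real"
begin

text \<open>Convexity of an extended-real valued function g : R^n -> R \<union> {+\<infinity>}
  (values in ereal, never -\<infinity>), via the usual inequality with ereal arithmetic.\<close>
definition ext_convex :: "('a::real_vector \<Rightarrow> ereal) \<Rightarrow> bool" where
  "ext_convex g \<longleftrightarrow> (\<forall>x y. \<forall>t::real. 0 \<le> t \<and> t \<le> 1 \<longrightarrow>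
      g ((1 - t) *\<^sub>R x + t *\<^sub>R y) \<le> ereal (1 - t) * g x + ereal t * g y)"

end

theory Submission
  imports Defs
begin

lemma opt_cond:
  fixes g :: "'a::real_normed_vector \<Rightarrow> ereal" and h :: "'a \<Rightarrow> real"
  assumes conv: "ext_convex g" and nm: "\<And>z. g z \<noteq> -\<infinity>"
    and gx: "g x < \<infinity>" and gy: "g y < \<infinity>"
    and opt: "\<And>z. g x + ereal (h x) \<le> g z + ereal (h z)"
    and hd: "(h has_derivative h') (at x)"
  shows "real_of_ereal (g y) - real_of_ereal (g x) \<ge> - h' (y - x)"
proof -
  define a where "a = real_of_ereal (g x)"
  define b where "b = real_of_ereal (g y)"
  have ga: "g x = ereal a" using gx nm[of x] unfolding a_def by (cases "g x") auto
  have gb: "g y = ereal b" using gy nm[of y] unfolding b_def by (cases "g y") auto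
  define \<phi> where "\<phi> = (\<lambda>t::real. h (x + t *\<^sub>R (y - x)))"
  have step: "(\<phi> t - \<phi> 0) / t \<ge> -(b - a)" if t: "0 < t" "t \<le> 1" for t
  proof -
    have e: "(1 - t) *\<^sub>R x + t *\<^sub>R y = x + t *\<^sub>R (y - x)" by (simp add: algebra_simps)
    have "g (x + t *\<^sub>R (y - x)) \<le> ereal (1 - t) * g x + ereal t * g y"
      using conv t unfolding ext_convex_def e[symmetric] by auto
    also have "\<dots> = ereal ((1 - t) * a + t * b)" using ga gb by simp
    finally have c: "g (x + t *\<^sub>R (y - x)) \<le> ereal ((1 - t) * a + t * b)" .
    have "ereal (a + h x) \<le> g (x + t *\<^sub>R (y - x)) + ereal (h (x + t *\<^sub>R (y - x)))"
      using opt[of "x + t *\<^sub>R (y - x)"] ga by simp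
    also have "\<dots> \<le> ereal ((1 - t) * a + t * b) + ereal (h (x + t *\<^sub>R (y - x)))"
      using c by (rule add_right_mono)
    finally have "a + h x \<le> (1 - t) * a + t * b + h (x + t *\<^sub>R (y - x))" by simp
    hence "\<phi> t - \<phi> 0 \<ge> -(b - a) * t" unfolding \<phi>_def by (simp add: algebra_simps)
    thus ?thesis using t by (simp add: field_simps)
  qed
  have "((\<lambda>t. x + t *\<^sub>R (y - x)) has_derivative (\<lambda>s. s *\<^sub>R (y - x))) (at 0)"
    by (auto intro!: derivative_eq_intros)
  hence "(\<phi> has_derivative (\<lambda>s. h' (s *\<^sub>R (y - x)))) (at 0)"
    unfolding \<phi>_def using has_derivative_compose[of "\<lambda>t. x + t *\<^sub>R (y - x)" _ 0 UNIV h h'] hd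
    by simp
  moreover have "h' (s *\<^sub>R (y - x)) = s * h' (y - x)" for s
    using hd by (simp add: has_derivative_def linear_cmul bounded_linear.linear linear_scale)
  ultimately have "(\<phi> has_field_derivative h' (y - x)) (at 0)"
    unfolding has_field_derivative_def by (simp add: mult.commute[of _ "h' (y - x)"])
  hence "(\<phi> has_field_derivative h' (y - x)) (at 0 within {0<..})"
    by (rule has_field_derivative_at_within)
  hence lim: "((\<lambda>t. (\<phi> t - \<phi> 0) / t) \<longlongrightarrow> h' (y - x)) (at_right 0)"
    unfolding has_field_derivative_iff by simp
  have ev: "eventually (\<lambda>t. (\<phi> t - \<phi> 0) / t \<ge> -(b - a)) (at_right 0)"
    unfolding eventually_at_right_field
    using step by (intro exI[of _ 1]) (simp add: less_imp_le)
  have "-(b - a) \<le> h' (y - x)"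
    by (rule tendsto_le[OF _ lim tendsto_const ev]) simp
  thus ?thesis unfolding a_def b_def by simp
qed

theorem lemma4p3:
  fixes g :: "real^'n \<Rightarrow> ereal" and p \<mu> :: real
    and lam_star lam_k lam_k1 :: "real^'n"
  assumes hp: "p \<ge> 1" and hmu: "\<mu> > 0"
    and g_conv: "ext_convex g"
    and g_not_minf: "\<And>x. g x \<noteq> -\<infinity>"
    and star_fin: "g lam_star < \<infinity>"
    and star_opt: "\<And>lam. g lam_star + ereal (\<mu> / (1 + 1/p) * norm lam_star powr (1 + 1/p))
                     \<le> g lam + ereal (\<mu> / (1 + 1/p) * norm lam powr (1 + 1/p))"
    and star_nz: "lam_star \<noteq> 0"
    and k_pos: "norm lam_k > 0"
    and k1_fin: "g lam_k1 < \<infinity>"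
    and k1_opt: "\<And>lam. g lam_k1 + ereal (\<mu> / 2 * (norm lam_k powr (1/p - 1)) * (norm lam_k1)\<^sup>2)
                     \<le> g lam + ereal (\<mu> / 2 * (norm lam_k powr (1/p - 1)) * (norm lam)\<^sup>2)"
  shows "(lam_k1 - lam_star) \<bullet> (norm lam_k powr (1 - 1/p) *\<^sub>R lam_star
            - norm lam_star powr (1 - 1/p) *\<^sub>R lam_k1) \<ge> 0 \<and>
         (norm lam_k powr (1 - 1/p) - norm lam_star powr (1 - 1/p)) * ((lam_k1 - lam_star) \<bullet> lam_k1)
            \<ge> norm lam_k powr (1 - 1/p) * (norm (lam_k1 - lam_star))\<^sup>2"
  proof -
  define a where "a = lam_star"
  define b where "b = lam_k1"
  define q where "q = 1 + 1/p"
  define N where "N = norm a"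
  define T where "T = norm lam_k powr (1/p - 1)"
  define K where "K = norm lam_k powr (1 - 1/p)"
  define A where "A = N powr (1 - 1/p)"
  define A' where "A' = N powr (1/p - 1)"
  have Npos: "N > 0" using star_nz unfolding N_def a_def by simp
  have p0: "p > 0" using hp by simp
  have TK: "T * K = 1" unfolding T_def K_def using k_pos
    by (simp add: powr_add[symmetric])
  have AA: "A' * A = 1" unfolding A'_def A_def using Npos
    by (simp add: powr_add[symmetric])
  have Kpos: "K > 0" unfolding K_def using k_pos by simp
  have Apos: "A > 0" unfolding A_def using Npos by simp
  have Tpos: "T > 0" unfolding T_def using k_pos by simp
  have qpos: "q > 0" unfolding q_def using p0 by (simp add: add_pos_pos)
  define h1 where "h1 = (\<lambda>z::real^'n. \<mu> / q * norm z powr q)"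
  have d1: "(h1 has_derivative (\<lambda>v. \<mu> / q * (norm a powr q * (v \<bullet> sgn a * q / norm a)))) (at a)"
    unfolding h1_def using star_nz qpos unfolding a_def
    by (auto intro!: derivative_eq_intros has_derivative_norm[unfolded gderiv_def])
  have r1: "real_of_ereal (g b) - real_of_ereal (g a) \<ge>
      - (\<mu> / q * (norm a powr q * ((b - a) \<bullet> sgn a * q / norm a)))"
    by (rule opt_cond[OF g_conv g_not_minf _ _ _ d1, of b])
      (use star_fin k1_fin star_opt in \<open>auto simp: a_def b_def h1_def q_def\<close>)
  have e1: "\<mu> / q * (norm a powr q * ((b - a) \<bullet> sgn a * q / norm a)) = \<mu> * A' * ((b - a) \<bullet> a)"
  proof -
    have "norm a powr q = N powr 1 * N powr (1/p)" unfolding q_def N_def by (rule powr_add)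
    hence "norm a powr q = N * N powr (1/p)" using Npos by simp
    moreover have "N powr (1/p) = N * A'"
    proof -
      have "N powr (1/p) = N powr (1 + (1/p - 1))" by simp
      also have "\<dots> = N powr 1 * N powr (1/p - 1)" by (rule powr_add)
      also have "\<dots> = N * A'" unfolding A'_def using Npos by simp
      finally show ?thesis .
    qed
    moreover have "q > 0" unfolding q_def using p0 by (simp add: add_pos_pos)
    ultimately show ?thesis using Npos unfolding N_def
      by (simp add: sgn_div_norm field_simps)
  qed
  define h2 where "h2 = (\<lambda>z::real^'n. \<mu> / 2 * T * (z \<bullet> z))"
  have d2: "(h2 has_derivative (\<lambda>v. \<mu> / 2 * T * (v \<bullet> b + b \<bullet> v))) (at b)"
    unfolding h2_def by (auto intro!: derivative_eq_intros)
  have r2: "real_of_ereal (g a) - real_of_ereal (g b) \<ge>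
      - (\<mu> / 2 * T * ((a - b) \<bullet> b + b \<bullet> (a - b)))"
    by (rule opt_cond[OF g_conv g_not_minf _ _ _ d2, of a])
      (use star_fin k1_fin k1_opt in \<open>auto simp: a_def b_def h2_def T_def power2_norm_eq_inner\<close>)
  have "0 \<ge> - \<mu> * A' * ((b - a) \<bullet> a) + \<mu> * T * ((b - a) \<bullet> b)"
    using r1 r2 e1 by (simp add: inner_commute algebra_simps)
  hence "\<mu> * (T * ((b - a) \<bullet> b) - A' * ((b - a) \<bullet> a)) \<le> 0"
    by (simp add: algebra_simps)
  hence "T * ((b - a) \<bullet> b) - A' * ((b - a) \<bullet> a) \<le> 0" using hmu
    by (simp add: mult_le_0_iff)
  hence "T * ((b - a) \<bullet> b) \<le> A' * ((b - a) \<bullet> a)" by simp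
  hence "K * A * (T * ((b - a) \<bullet> b)) \<le> K * A * (A' * ((b - a) \<bullet> a))"
    using Kpos Apos by simp
  moreover have "K * A * (T * ((b - a) \<bullet> b)) = (T * K) * A * ((b - a) \<bullet> b)" by simp
  moreover have "K * A * (A' * ((b - a) \<bullet> a)) = K * (A' * A) * ((b - a) \<bullet> a)" by simp
  ultimately have key: "A * ((b - a) \<bullet> b) \<le> K * ((b - a) \<bullet> a)"
    using TK AA by simp
  have g1: "(b - a) \<bullet> (K *\<^sub>R a - A *\<^sub>R b) \<ge> 0"
    using key by (simp add: inner_diff_right)
  have nn: "(norm (b - a))\<^sup>2 = (b - a) \<bullet> b - (b - a) \<bullet> a"
    by (simp add: power2_norm_eq_inner inner_diff_right)
  have g2: "(K - A) * ((b - a) \<bullet> b) \<ge> K * (norm (b - a))\<^sup>2"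
    using key unfolding nn by (simp add: algebra_simps)
  show ?thesis using g1 g2 unfolding a_def b_def K_def A_def N_def by simp
qed

end
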